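(* In the Poisson-gamma DNN model with h-likelihood $h$ as in the context, fix $\boldsymbol\theta=(\mathbf w,\boldsymbol\beta,\lambda)$ with $\lambda>0$, and let $\mu_{i+}=\sum_{j=1}^{q_i}\mu_{ij}^m$. Then: (i) $h(\boldsymbol\theta,\cdot)$ has a unique maximizer $\widetilde{\mathbf v}=(\widetilde v_1,\dots,\widetilde v_n)$ over $\mathbb R^n$, given by $\widetilde v_i=\log\dfrac{y_{i+}+\lambda^{-1}}{\mu_{i+}+\lambda^{-1}}$; this is also the maximizer of $\mathbf v\mapsto\log f_{\boldsymbol\theta}(\mathbf v\mid\mathbf y)$; (ii) $h(\boldsymbol\theta,\widetilde{\mathbf v})=\ell(\boldsymbol\theta;\mathbf y)$, where $\ell(\boldsymbol\theta;\mathbf y)=\log\int\exp\{\ell_e(\boldsymbol\theta,\mathbf v)\}\,d\mathbf v$ is the marginal log-likelihood; consequently $(\widehat{\boldsymbol\theta},\widehat{\mathbf v})$ maximizes $h$ jointly if and only if $\widehat{\boldsymbol\theta}$ maximizes $\ell(\cdot;\mathbf y)$ and $\widehat{\mathbf v}=\widetilde{\mathbf v}(\widehat{\boldsymbol\theta})$; (iii) $\exp(\widetilde v_i)=E(u_i\mid\mathbf y_i)$ and $\exp(\widetilde v_i)\mu_{ij}^m=E(\mu_{ij}^c\mid\mathbf y)$, where $\mathbf y_i=(y_{i1},\dots,y_{iq_i})$.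
   Context: Data: counts $y_{ij}\in\{0,1,2,\dots\}$ with input vectors $\mathbf x_{ij}\in\mathbb R^p$, for subjects $i=1,\dots,n$ and $j=1,\dots,q_i$. Neural network predictor: $\mathrm{NN}(\mathbf x;\mathbf w,\boldsymbol\beta)=\sum_{k=1}^{p_L}g_k(\mathbf x;\mathbf w)\beta_k+\beta_0$, where $g_k(\cdot;\mathbf w)$ are arbitrary functions (last hidden layer nodes) parametrized by $\mathbf w$, and $\boldsymbol\beta=(\beta_0,\dots,\beta_{p_L})$. Marginal mean $\mu_{ij}^m=\exp\{\mathrm{NN}(\mathbf x_{ij};\mathbf w,\boldsymbol\beta)\}$. Poisson-gamma DNN: $u_1,\dots,u_n$ i.i.d. $\mathrm{Gamma}(\lambda^{-1},\lambda^{-1})$ (shape $\lambda^{-1}$, rate $\lambda^{-1}$, so $E u_i=1$, $\mathrm{var}\,u_i=\lambda$), $v_i=\log u_i$, and conditionally on $\mathbf u$ the $y_{ij}$ are independent with $y_{ij}\mid u_i\sim\mathrm{Poisson}(\mu_{ij}^c)$, $\mu^c_{ij}=\mu^m_{ij}u_i=\exp\{\mathrm{NN}(\mathbf x_{ij};\mathbf w,\boldsymbol\beta)+v_i\}$. Fixed parameters $\boldsymbol\theta=(\mathbf w,\boldsymbol\beta,\lambda)$. Extended likelihood $\ell_e(\boldsymbol\theta,\mathbf v)=\sum_{i,j}\log f_{\boldsymbol\theta}(y_{ij}\mid v_i)+\sum_i\log f_{\boldsymbol\theta}(v_i)$, where $f_{\boldsymbol\theta}(y_{ij}\mid v_i)$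 is the Poisson pmf with mean $\mu_{ij}^c$ and $f_{\boldsymbol\theta}(v_i)$ is the density of $v_i=\log u_i$, i.e. $\log f_{\boldsymbol\theta}(v_i)=(v_i-e^{v_i})/\lambda-\lambda^{-1}\log\lambda-\log\Gamma(\lambda^{-1})$. With $y_{i+}=\sum_{j=1}^{q_i}y_{ij}$, let $c_i(\lambda;y_{i+})=(y_{i+}+\lambda^{-1})+\log\Gamma(y_{i+}+\lambda^{-1})-(y_{i+}+\lambda^{-1})\log(y_{i+}+\lambda^{-1})$. The h-likelihood is $h(\boldsymbol\theta,\mathbf v)=\ell_e(\boldsymbol\theta,\mathbf v)+\sum_{i=1}^n c_i(\lambda;y_{i+})$. *)

theory Defs
  imports "HOL-Analysis.Analysis"
begin

text \<open>Subjects are indexed by a finite type 'n (n = CARD('n)),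
  observations of subject i by j < q i. Inputs live in real^'p. The last hidden layer nodes
  are arbitrary functions g k x w (k = 1..pL) parametrised by w :: 'w.\<close>

type_synonym ('w) param = "'w \<times> (nat \<Rightarrow> real) \<times> real"

definition NN :: "(nat \<Rightarrow> real^'p \<Rightarrow> 'w \<Rightarrow> real) \<Rightarrow> nat \<Rightarrow> real^'p \<Rightarrow> 'w \<Rightarrow> (nat \<Rightarrow> real) \<Rightarrow> real" where
  "NN g pL x w \<beta> = (\<Sum>k=1..pL. g k x w * \<beta> k) + \<beta> 0"

definition mu_m :: "(nat \<Rightarrow> real^'p \<Rightarrow> 'w \<Rightarrow> real) \<Rightarrow> nat \<Rightarrow> ('n \<Rightarrow> nat \<Rightarrow> real^'p) \<Rightarrow> 'w param \<Rightarrow> 'n \<Rightarrow> nat \<Rightarrow> real" where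
  "mu_m g pL xs \<theta> i j = (case \<theta> of (w, \<beta>, lam) \<Rightarrow> exp (NN g pL (xs i j) w \<beta>))"

definition mu_c :: "(nat \<Rightarrow> real^'p \<Rightarrow> 'w \<Rightarrow> real) \<Rightarrow> nat \<Rightarrow> ('n \<Rightarrow> nat \<Rightarrow> real^'p) \<Rightarrow> 'w param \<Rightarrow> 'n \<Rightarrow> nat \<Rightarrow> real \<Rightarrow> real" where
  "mu_c g pL xs \<theta> i j t = (case \<theta> of (w, \<beta>, lam) \<Rightarrow> exp (NN g pL (xs i j) w \<beta> + t))"

definition poisson_pmf_val :: "real \<Rightarrow> nat \<Rightarrow> real" where
  "poisson_pmf_val \<mu> k = exp (- \<mu>) * \<mu> ^ k / fact k"

text \<open>log density of v = log u, u ~ Gamma(shape 1/lambda, rate 1/lambda)\<close>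
definition log_f_v :: "real \<Rightarrow> real \<Rightarrow> real" where
  "log_f_v lam t = (t - exp t) / lam - (1 / lam) * ln lam - ln (Gamma (1 / lam))"

definition yplus :: "('n \<Rightarrow> nat) \<Rightarrow> ('n \<Rightarrow> nat \<Rightarrow> nat) \<Rightarrow> 'n \<Rightarrow> real" where
  "yplus q y i = (\<Sum>j<q i. real (y i j))"

definition mu_plus :: "(nat \<Rightarrow> real^'p \<Rightarrow> 'w \<Rightarrow> real) \<Rightarrow> nat \<Rightarrow> ('n \<Rightarrow> nat) \<Rightarrow> ('n \<Rightarrow> nat \<Rightarrow> real^'p) \<Rightarrow> 'w param \<Rightarrow> 'n \<Rightarrow> real" where
  "mu_plus g pL q xs \<theta> i = (\<Sum>j<q i. mu_m g pL xs \<theta> i j)"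

definition ell_e_i :: "(nat \<Rightarrow> real^'p \<Rightarrow> 'w \<Rightarrow> real) \<Rightarrow> nat \<Rightarrow> ('n \<Rightarrow> nat) \<Rightarrow> ('n \<Rightarrow> nat \<Rightarrow> nat) \<Rightarrow> ('n \<Rightarrow> nat \<Rightarrow> real^'p) \<Rightarrow> 'w param \<Rightarrow> 'n \<Rightarrow> real \<Rightarrow> real" where
  "ell_e_i g pL q y xs \<theta> i t =
     (\<Sum>j<q i. ln (poisson_pmf_val (mu_c g pL xs \<theta> i j t) (y i j))) + log_f_v (snd (snd \<theta>)) t"

definition ell_e :: "(nat \<Rightarrow> real^'p \<Rightarrow> 'w \<Rightarrow> real) \<Rightarrow> nat \<Rightarrow> ('n::finite \<Rightarrow> nat) \<Rightarrow> ('n \<Rightarrow> nat \<Rightarrow> nat) \<Rightarrow> ('n \<Rightarrow> nat \<Rightarrow> real^'p) \<Rightarrow> 'w param \<Rightarrow> real^'n \<Rightarrow> real" where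
  "ell_e g pL q y xs \<theta> v =
     (\<Sum>i\<in>UNIV. \<Sum>j<q i. ln (poisson_pmf_val (mu_c g pL xs \<theta> i j (v $ i)) (y i j)))
     + (\<Sum>i\<in>UNIV. log_f_v (snd (snd \<theta>)) (v $ i))"

definition c_adj :: "real \<Rightarrow> real \<Rightarrow> real" where
  "c_adj lam yp = (yp + 1 / lam) + ln (Gamma (yp + 1 / lam)) - (yp + 1 / lam) * ln (yp + 1 / lam)"

definition hlik :: "(nat \<Rightarrow> real^'p \<Rightarrow> 'w \<Rightarrow> real) \<Rightarrow> nat \<Rightarrow> ('n::finite \<Rightarrow> nat) \<Rightarrow> ('n \<Rightarrow> nat \<Rightarrow> nat) \<Rightarrow> ('n \<Rightarrow> nat \<Rightarrow> real^'p) \<Rightarrow> 'w param \<Rightarrow> real^'n \<Rightarrow> real" where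
  "hlik g pL q y xs \<theta> v = ell_e g pL q y xs \<theta> v + (\<Sum>i\<in>UNIV. c_adj (snd (snd \<theta>)) (yplus q y i))"

definition marg_loglik :: "(nat \<Rightarrow> real^'p \<Rightarrow> 'w \<Rightarrow> real) \<Rightarrow> nat \<Rightarrow> ('n::finite \<Rightarrow> nat) \<Rightarrow> ('n \<Rightarrow> nat \<Rightarrow> nat) \<Rightarrow> ('n \<Rightarrow> nat \<Rightarrow> real^'p) \<Rightarrow> 'w param \<Rightarrow> real" where
  "marg_loglik g pL q y xs \<theta> = ln (\<integral>v. exp (ell_e g pL q y xs \<theta> v) \<partial>(lborel :: (real^'n) measure))"

text \<open>log f_theta(v | y) = l_e(theta, v) - l(theta; y)  (Bayes formula)\<close>
definition log_post :: "(nat \<Rightarrow> real^'p \<Rightarrow> 'w \<Rightarrow> real) \<Rightarrow> nat \<Rightarrow> ('n::finite \<Rightarrow> nat) \<Rightarrow> ('n \<Rightarrow> nat \<Rightarrow> nat) \<Rightarrow> ('n \<Rightarrow> nat \<Rightarrow> real^'p) \<Rightarrow> 'w param \<Rightarrow> real^'n \<Rightarrow> real" where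
  "log_post g pL q y xs \<theta> v = ell_e g pL q y xs \<theta> v - marg_loglik g pL q y xs \<theta>"

definition post_exp :: "(nat \<Rightarrow> real^'p \<Rightarrow> 'w \<Rightarrow> real) \<Rightarrow> nat \<Rightarrow> ('n::finite \<Rightarrow> nat) \<Rightarrow> ('n \<Rightarrow> nat \<Rightarrow> nat) \<Rightarrow> ('n \<Rightarrow> nat \<Rightarrow> real^'p) \<Rightarrow> 'w param \<Rightarrow> (real^'n \<Rightarrow> real) \<Rightarrow> real" where
  "post_exp g pL q y xs \<theta> \<phi> =
     (\<integral>v. \<phi> v * exp (ell_e g pL q y xs \<theta> v) \<partial>(lborel :: (real^'n) measure))
     / (\<integral>v. exp (ell_e g pL q y xs \<theta> v) \<partial>(lborel :: (real^'n) measure))"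

text \<open>E(phi(v_i) | y_i): posterior expectation given only subject i's data\<close>
definition post_exp_i :: "(nat \<Rightarrow> real^'p \<Rightarrow> 'w \<Rightarrow> real) \<Rightarrow> nat \<Rightarrow> ('n \<Rightarrow> nat) \<Rightarrow> ('n \<Rightarrow> nat \<Rightarrow> nat) \<Rightarrow> ('n \<Rightarrow> nat \<Rightarrow> real^'p) \<Rightarrow> 'w param \<Rightarrow> 'n \<Rightarrow> (real \<Rightarrow> real) \<Rightarrow> real" where
  "post_exp_i g pL q y xs \<theta> i \<phi> =
     (\<integral>t. \<phi> t * exp (ell_e_i g pL q y xs \<theta> i t) \<partial>lborel)
     / (\<integral>t. exp (ell_e_i g pL q y xs \<theta> i t) \<partial>lborel)"

definition vtilde :: "(nat \<Rightarrow> real^'p \<Rightarrow> 'w \<Rightarrow> real) \<Rightarrow> nat \<Rightarrow> ('n::finite \<Rightarrow> nat) \<Rightarrow> ('n \<Rightarrow> nat \<Rightarrow> nat) \<Rightarrow> ('n \<Rightarrow> nat \<Rightarrow> real^'p) \<Rightarrow> 'w param \<Rightarrow> real^'n" where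
  "vtilde g pL q y xs \<theta> = (\<chi> i. ln ((yplus q y i + 1 / snd (snd \<theta>)) / (mu_plus g pL q xs \<theta> i + 1 / snd (snd \<theta>))))"

definition ParamSpace :: "'w param set" where
  "ParamSpace = {\<theta>. snd (snd \<theta>) > 0}"

end

theory Submission
  imports Defs
begin


lemma subst_pt:
  fixes a b x :: real assumes "b > 0"
  shows "(b*exp x) powr (a-1) / exp (b*exp x) / b powr a * (b * exp x) = exp (a*x - b*exp x)"
proof -
  have "b*exp x = exp (ln b + x)" using assms by (simp add: exp_add)
  moreover have "b powr a = exp (a * ln b)" using assms by (simp add: powr_def)
  ultimately have "(b*exp x) powr (a-1) / exp (b*exp x) / b powr a * (b * exp x)
     = exp ((a-1)*(ln b + x)) / exp (b*exp x) / exp (a*ln b) * exp (ln b + x)"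
    by (simp add: powr_def)
  also have "\<dots> = exp ((a-1)*(ln b + x) - b*exp x - a*ln b + (ln b + x))"
    by (simp add: exp_add exp_diff)
  also have "(a-1)*(ln b + x) - b*exp x - a*ln b + (ln b + x) = a*x - b*exp x"
    by (simp add: algebra_simps)
  finally show ?thesis .
qed



lemma gamma_nn:
  fixes a b :: real assumes a: "a > 0" and b: "b > 0"
  shows "(\<integral>\<^sup>+t. ennreal (exp (a*t - b*exp t)) \<partial>lborel) = ennreal (Gamma a / b powr a)"
proof -
  define f where "f u = u powr (a-1) / exp u / b powr a" for u
  define g where "g t = b * exp t" for t :: real
  have fm[measurable]: "f \<in> borel_measurable borel" unfolding f_def by measurable
  have eqn: "\<And>n::nat. (\<integral>\<^sup>+x. f x * indicator {g (- real n)..g (real n)} x \<partial>lborel) =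
      (\<integral>\<^sup>+x. f (g x) * g x * indicator {- real n..real n} x \<partial>lborel)"
    by (rule nn_integral_substitution) (use b in \<open>auto simp: g_def set_borel_measurable_def intro!: derivative_eq_intros continuous_intros\<close>)
  have eq2: "f (g x) * g x = exp (a*x - b*exp x)" for x
    unfolding f_def g_def using subst_pt[OF b] by simp
  have L1: "(\<lambda>n::nat. \<integral>\<^sup>+x. f x * indicator {g (- real n)..g (real n)} x \<partial>lborel) \<longlonglongrightarrow>
       (\<integral>\<^sup>+x. f x * indicator {0<..} x \<partial>lborel)"
  proof (rule nn_integral_LIMSEQ)
    show "incseq (\<lambda>n x. ennreal (f x * indicator {g (- real n)..g (real n)} x))"
    proof (intro incseq_SucI le_funI)
      fix n x
      have "g (- real (Suc n)) \<le> g (- real n)" "g (real n) \<le> g (real (Suc n))"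
        using b by (auto simp: g_def)
      moreover have "0 < g t" for t using b by (simp add: g_def)
      moreover have "0 \<le> f x" if "x > 0" using that b by (simp add: f_def)
      ultimately show "ennreal (f x * indicator {g (- real n)..g (real n)} x) \<le>
          ennreal (f x * indicator {g (- real (Suc n))..g (real (Suc n))} x)"
        by (intro ennreal_leI) (auto simp: indicator_def, (meson less_le_trans order_trans)+)
    qed
  next
    show "\<And>n. (\<lambda>x. ennreal (f x * indicator {g (- real n)..g (real n)} x)) \<in> borel_measurable lborel"
      by measurable
  next
    fix x :: real
    show "(\<lambda>n. ennreal (f x * indicator {g (- real n)..g (real n)} x)) \<longlonglongrightarrow>
        ennreal (f x * indicator {0<..} x)"
    proof (cases "x > 0")
      case True
      obtain N :: nat where N: "\<bar>ln (x/b)\<bar> \<le> real N" using real_arch_simple by blast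
      have "eventually (\<lambda>n. ennreal (f x * indicator {g (- real n)..g (real n)} x) = ennreal (f x * indicator {0<..} x)) sequentially"
      proof (rule eventually_sequentiallyI[of N])
        fix n assume "N \<le> n"
        then have h: "\<bar>ln (x/b)\<bar> \<le> real n" using N by linarith
        have "g (- real n) \<le> x"
        proof -
          have "- real n \<le> ln (x/b)" using h by linarith
          then have "exp (- real n) \<le> x/b" using True b by (metis divide_pos_pos exp_le_cancel_iff exp_ln)
          then show ?thesis using b by (simp add: g_def field_simps)
        qed
        moreover have "x \<le> g (real n)"
        proof -
          have "ln (x/b) \<le> real n" using h by linarith
          then have "x/b \<le> exp (real n)" using True b by (metis divide_pos_pos exp_le_cancel_iff exp_ln)
          then show ?thesis using b by (simp add: g_def field_simps)
        qed
        ultimately show "ennreal (f x * indicator {g (- real n)..g (real n)} x) = ennreal (f x * indicator {0<..} x)"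
          using True by (simp add: indicator_def)
      qed
      then show ?thesis by (rule tendsto_eventually)
    next
      case False
      have "\<And>n. x < g (- real n)" using False b by (simp add: g_def) (smt (verit) exp_gt_zero mult_pos_pos)
      then have "\<And>n. ennreal (f x * indicator {g (- real n)..g (real n)} x) = ennreal (f x * indicator {0<..} x)"
        using False by (auto simp: indicator_def not_le dest: leD)
      then show ?thesis by simp
    qed
  qed
  have L2: "(\<lambda>n::nat. \<integral>\<^sup>+x. f (g x) * g x * indicator {- real n..real n} x \<partial>lborel) \<longlonglongrightarrow>
       (\<integral>\<^sup>+x. exp (a*x - b*exp x) \<partial>lborel)"
  proof (rule nn_integral_LIMSEQ)
    show "incseq (\<lambda>n x. ennreal (f (g x) * g x * indicator {- real n..real n} x))"
      by (intro incseq_SucI le_funI ennreal_leI) (auto simp: eq2 indicator_def)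
  next
    show "\<And>n. (\<lambda>x. ennreal (f (g x) * g x * indicator {- real n..real n} x)) \<in> borel_measurable lborel"
      unfolding eq2 by measurable
  next
    fix x :: real
    obtain N :: nat where N: "\<bar>x\<bar> \<le> real N" using real_arch_simple by blast
    have "eventually (\<lambda>n. ennreal (f (g x) * g x * indicator {- real n..real n} x) = ennreal (exp (a*x - b*exp x))) sequentially"
      by (rule eventually_sequentiallyI[of N]) (use N in \<open>auto simp: eq2 indicator_def\<close>)
    then show "(\<lambda>n. ennreal (f (g x) * g x * indicator {- real n..real n} x)) \<longlonglongrightarrow> ennreal (exp (a*x - b*exp x))"
      by (rule tendsto_eventually)
  qed
  have E: "(\<integral>\<^sup>+x. exp (a*x - b*exp x) \<partial>lborel) = (\<integral>\<^sup>+x. f x * indicator {0<..} x \<partial>lborel)"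
    using LIMSEQ_unique[OF L2 L1[unfolded eqn]] .
  have pw: "ennreal (f x * indicator {0<..} x) = ennreal (indicator {0..} x * x powr (a - 1) / exp x) * ennreal (1 / b powr a)" for x
    using b by (subst ennreal_mult[symmetric]) (auto simp: f_def indicator_def)
  have "(\<integral>\<^sup>+x. f x * indicator {0<..} x \<partial>lborel) = 
     (\<integral>\<^sup>+x. ennreal (indicator {0..} x * x powr (a - 1) / exp x) \<partial>lborel) * ennreal (1 / b powr a)"
    unfolding pw by (rule nn_integral_multc) measurable
  also have "\<dots> = ennreal (Gamma a) * ennreal (1 / b powr a)"
    using Gamma_conv_nn_integral_real[OF a] by simp
  also have "\<dots> = ennreal (Gamma a / b powr a)"
    using a b by (subst ennreal_mult[symmetric]) auto
  finally show ?thesis using E by simp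
qed


lemma nn_integral_vec_prod:
  fixes f :: "'n::finite \<Rightarrow> real \<Rightarrow> ennreal"
  assumes [measurable]: "\<And>i. f i \<in> borel_measurable borel"
  shows "(\<integral>\<^sup>+x. (\<Prod>i\<in>UNIV. f i (x$i)) \<partial>(lborel::(real^'n) measure)) = (\<Prod>i\<in>UNIV. \<integral>\<^sup>+t. f i t \<partial>lborel)"
proof -
  define F where "F b = f (THE i. b = axis i (1::real))" for b :: "real^'n"
  have B: "(Basis :: (real^'n) set) = range (\<lambda>i. axis i 1)"
    by (auto simp: Basis_vec_def)
  have inj: "inj (\<lambda>i::'n. axis i (1::real))" by (auto simp: inj_def axis_eq_axis)
  have Fa: "F (axis i 1) = f i" for i unfolding F_def by (auto simp: axis_eq_axis)
  have "(\<integral>\<^sup>+x. (\<Prod>b\<in>Basis. F b (x \<bullet> b)) \<partial>(lborel::(real^'n) measure)) = (\<Prod>b\<in>Basis. (\<integral>\<^sup>+x. F b x \<partial>lborel))"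
    by (rule nn_integral_lborel_prod) (auto simp: B Fa)
  moreover have "(\<Prod>b\<in>Basis. F b (x \<bullet> b)) = (\<Prod>i\<in>UNIV. f i (x$i))" for x :: "real^'n"
    unfolding B by (subst prod.reindex[OF inj]) (simp add: Fa cart_eq_inner_axis)
  moreover have "(\<Prod>b\<in>Basis. (\<integral>\<^sup>+x. F b x \<partial>lborel)) = (\<Prod>i\<in>UNIV. \<integral>\<^sup>+t. f i t \<partial>lborel)"
    unfolding B by (subst prod.reindex[OF inj]) (simp add: Fa)
  ultimately show ?thesis by simp
qed

lemma integral_vec_prod:
  fixes h :: "'n::finite \<Rightarrow> real \<Rightarrow> real"
  assumes [measurable]: "\<And>i. h i \<in> borel_measurable borel"
    and nn: "\<And>i t. 0 \<le> h i t"
    and W: "\<And>i. (\<integral>\<^sup>+t. ennreal (h i t) \<partial>lborel) = ennreal (W i)" "\<And>i. 0 \<le> W i"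
  shows "(\<integral>x. (\<Prod>i\<in>UNIV. h i (x$i)) \<partial>(lborel::(real^'n) measure)) = (\<Prod>i\<in>UNIV. W i)"
proof -
  have m: "(\<lambda>x::real^'n. \<Prod>i\<in>UNIV. h i (x$i)) \<in> borel_measurable lborel"
    by measurable
  have "(\<integral>x. (\<Prod>i\<in>UNIV. h i (x$i)) \<partial>(lborel::(real^'n) measure))
     = enn2real (\<integral>\<^sup>+x. ennreal (\<Prod>i\<in>UNIV. h i (x$i)) \<partial>(lborel::(real^'n) measure))"
    by (rule integral_eq_nn_integral[OF m]) (auto intro!: prod_nonneg nn)
  also have "(\<lambda>x::real^'n. ennreal (\<Prod>i\<in>UNIV. h i (x$i))) = (\<lambda>x. \<Prod>i\<in>UNIV. ennreal (h i (x$i)))"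
    using nn by (auto simp: prod_ennreal)
  also have "(\<integral>\<^sup>+x. (\<Prod>i\<in>UNIV. ennreal (h i (x$i))) \<partial>(lborel::(real^'n) measure)) = (\<Prod>i\<in>UNIV. ennreal (W i))"
    by (subst nn_integral_vec_prod) (auto simp: W)
  also have "\<dots> = ennreal (\<Prod>i\<in>UNIV. W i)" using W(2) by (simp add: prod_ennreal)
  finally show ?thesis using W(2) by (simp add: prod_nonneg)
qed



definition "AA q y lam i = yplus q y i + 1/lam"
definition "BB g pL q xs w \<beta> lam i = mu_plus g pL q xs (w,\<beta>,lam) i + 1/lam"
definition "CC g pL q y xs w \<beta> lam i = (\<Sum>j<q i. real (y i j) * NN g pL (xs i j) w \<beta> - ln (fact (y i j)))
   - (1/lam)*ln lam - ln (Gamma (1/lam))"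

lemma ln_pois: "\<mu> > 0 \<Longrightarrow> ln (poisson_pmf_val \<mu> k) = -\<mu> + real k * ln \<mu> - ln (fact k)"
  unfolding poisson_pmf_val_def by (simp add: ln_mult ln_div ln_realpow)

lemma ell_e_i_form:
  "ell_e_i g pL q y xs (w,\<beta>,lam) i t =
     AA q y lam i * t - BB g pL q xs w \<beta> lam i * exp t + CC g pL q y xs w \<beta> lam i"
proof -
  have "(\<Sum>j<q i. ln (poisson_pmf_val (mu_c g pL xs (w,\<beta>,lam) i j t) (y i j)))
     = (\<Sum>j<q i. - exp (NN g pL (xs i j) w \<beta> + t) + real (y i j) * t
           + (real (y i j) * NN g pL (xs i j) w \<beta> - ln (fact (y i j))))"
    by (rule sum.cong) (auto simp: mu_c_def ln_pois algebra_simps)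
  also have "\<dots> = - exp t * mu_plus g pL q xs (w,\<beta>,lam) i + yplus q y i * t
       + (\<Sum>j<q i. real (y i j) * NN g pL (xs i j) w \<beta> - ln (fact (y i j)))"
    by (simp add: sum.distrib mu_plus_def yplus_def mu_m_def sum_distrib_left sum_distrib_right
        sum_negf exp_add sum_subtractf mult.commute)
  finally show ?thesis
    unfolding ell_e_i_def AA_def BB_def CC_def log_f_v_def by (simp add: algebra_simps diff_divide_distrib)
qed

lemma ell_e_sum: "ell_e g pL q y xs \<theta> v = (\<Sum>i\<in>UNIV. ell_e_i g pL q y xs \<theta> i (v$i))"
  unfolding ell_e_def ell_e_i_def by (simp add: sum.distrib)

context
  fixes g :: "nat \<Rightarrow> real^'p \<Rightarrow> 'w \<Rightarrow> real" and pL :: nat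
    and q :: "'n::finite \<Rightarrow> nat" and y :: "'n \<Rightarrow> nat \<Rightarrow> nat"
    and xs :: "'n \<Rightarrow> nat \<Rightarrow> real^'p"
    and w :: 'w and \<beta> :: "nat \<Rightarrow> real" and lam :: real
  assumes lam: "lam > 0"
begin

lemma AA_pos: "AA q y lam i > 0"
  using lam unfolding AA_def yplus_def by (intro add_nonneg_pos sum_nonneg) auto

lemma BB_pos: "BB g pL q xs w \<beta> lam i > 0"
  using lam unfolding BB_def mu_plus_def mu_m_def by (intro add_nonneg_pos sum_nonneg) auto

lemma vtilde_nth: "vtilde g pL q y xs (w,\<beta>,lam) $ i = ln (AA q y lam i / BB g pL q xs w \<beta> lam i)"
  unfolding vtilde_def AA_def BB_def by simp

lemma Z_nn:
  assumes "s \<ge> 0"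
  shows "(\<integral>\<^sup>+t. ennreal (exp (s*t) * exp (ell_e_i g pL q y xs (w,\<beta>,lam) i t)) \<partial>lborel)
    = ennreal (exp (CC g pL q y xs w \<beta> lam i) * (Gamma (AA q y lam i + s) / BB g pL q xs w \<beta> lam i powr (AA q y lam i + s)))"
proof -
  let ?A = "AA q y lam i" and ?B = "BB g pL q xs w \<beta> lam i" and ?C = "CC g pL q y xs w \<beta> lam i"
  have "(\<lambda>t. ennreal (exp (s*t) * exp (ell_e_i g pL q y xs (w,\<beta>,lam) i t)))
     = (\<lambda>t. ennreal (exp ((?A + s)*t - ?B * exp t)) * ennreal (exp ?C))"
    by (auto simp: ell_e_i_form ennreal_mult[symmetric] exp_add[symmetric] algebra_simps)
  then have "(\<integral>\<^sup>+t. ennreal (exp (s*t) * exp (ell_e_i g pL q y xs (w,\<beta>,lam) i t)) \<partial>lborel)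
     = (\<integral>\<^sup>+t. ennreal (exp ((?A + s)*t - ?B * exp t)) \<partial>lborel) * ennreal (exp ?C)"
    by (simp add: nn_integral_multc)
  also have "\<dots> = ennreal (Gamma (?A + s) / ?B powr (?A + s)) * ennreal (exp ?C)"
    using AA_pos[of i] BB_pos[of i] assms by (subst gamma_nn) auto
  finally show ?thesis
    using AA_pos[of i] BB_pos[of i] assms by (simp add: ennreal_mult[symmetric] mult.commute)
qed

end


lemma exp_strict: "x \<noteq> 0 \<Longrightarrow> 1 + x < exp (x::real)"
proof (cases "1 + x/2 < 0")
  case True then show ?thesis using exp_gt_zero[of x] by linarith
next
  case False
  assume x: "x \<noteq> 0"
  have "(1 + x/2)^2 \<le> exp (x/2) ^ 2" using False by (intro power_mono) auto
  also have "\<dots> = exp x" by (simp add: power2_eq_square exp_add[symmetric])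
  finally have "(1 + x/2)^2 \<le> exp x" .
  moreover have "(1 + x/2)^2 = 1 + x + x^2/4" by (simp add: power2_eq_square field_simps)
  moreover have "x^2 > 0" using x by simp
  ultimately show ?thesis by linarith
qed

lemma one_d_key:
  fixes a b r :: real assumes a: "a > 0" and b: "b > 0"
  shows "(a*ln (a/b) - b*exp (ln (a/b))) - (a*r - b*exp r) = a * (exp (r - ln (a/b)) - 1 - (r - ln (a/b)))"
proof -
  let ?m = "ln (a/b)"
  have em: "exp ?m = a/b" using a b by simp
  have es: "b * exp r = a * exp (r - ?m)" using a b by (simp add: exp_diff em)
  show ?thesis using b by (simp add: es em algebra_simps)
qed

lemma one_d_max:
  fixes a b r :: real assumes a: "a > 0" and b: "b > 0"
  shows "a*r - b*exp r \<le> a*ln (a/b) - b*exp (ln (a/b))"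
proof -
  have h: "1 + (r - ln (a/b)) \<le> exp (r - ln (a/b))" by simp
  have "0 \<le> a * (exp (r - ln (a/b)) - 1 - (r - ln (a/b)))" by (rule mult_nonneg_nonneg) (use a h in linarith)+
  then show ?thesis using one_d_key[OF a b, of r] by linarith
qed

lemma one_d_uq:
  fixes a b r :: real assumes a: "a > 0" and b: "b > 0"
    and eq: "a*r - b*exp r = a*ln (a/b) - b*exp (ln (a/b))"
  shows "r = ln (a/b)"
proof (rule ccontr)
  assume "r \<noteq> ln (a/b)"
  then have "1 + (r - ln (a/b)) < exp (r - ln (a/b))" by (intro exp_strict) simp
  then have "0 < a * (exp (r - ln (a/b)) - 1 - (r - ln (a/b)))" by (intro mult_pos_pos) (use a in linarith)+
  then show False using one_d_key[OF a b, of r] eq by linarith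
qed

lemma max_sep:
  fixes F :: "'n::finite \<Rightarrow> real \<Rightarrow> real" and m :: "real^'n"
  assumes le: "\<And>i s. F i s \<le> F i (m$i)" and uq: "\<And>i s. F i s = F i (m$i) \<Longrightarrow> s = m$i"
  shows "(\<forall>v'. (\<Sum>i\<in>UNIV. F i (v'$i)) + c \<le> (\<Sum>i\<in>UNIV. F i (v$i)) + c) \<longleftrightarrow> v = m"
proof
  assume H: "\<forall>v'. (\<Sum>i\<in>UNIV. F i (v'$i)) + c \<le> (\<Sum>i\<in>UNIV. F i (v$i)) + c"
  show "v = m"
  proof (subst vec_eq_iff, intro allI)
    fix i
    define v' where "v' = (\<chi> k. if k = i then m$i else v$k)"
    have "(\<Sum>k\<in>UNIV. F k (v'$k)) - (\<Sum>k\<in>UNIV. F k (v$k)) = (\<Sum>k\<in>UNIV. if k = i then F i (m$i) - F i (v$i) else 0)"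
      unfolding sum_subtractf[symmetric] by (rule sum.cong) (auto simp: v'_def)
    also have "\<dots> = F i (m$i) - F i (v$i)" by simp
    finally have "F i (m$i) \<le> F i (v$i)" using H[rule_format, of v'] by linarith
    then show "v$i = m$i" using le[of i "v$i"] uq[of i "v$i"] by linarith
  qed
next
  assume "v = m"
  then show "\<forall>v'. (\<Sum>i\<in>UNIV. F i (v'$i)) + c \<le> (\<Sum>i\<in>UNIV. F i (v$i)) + c"
    by (auto intro!: sum_mono le)
qed

context
  fixes g :: "nat \<Rightarrow> real^'p \<Rightarrow> 'w \<Rightarrow> real" and pL :: nat
    and q :: "'n::finite \<Rightarrow> nat" and y :: "'n \<Rightarrow> nat \<Rightarrow> nat"
    and xs :: "'n \<Rightarrow> nat \<Rightarrow> real^'p"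
    and w :: 'w and \<beta> :: "nat \<Rightarrow> real" and lam :: real
  assumes lam: "lam > 0"
begin

abbreviation "A i \<equiv> AA q y lam i"
abbreviation "B i \<equiv> BB g pL q xs w \<beta> lam i"
abbreviation "C i \<equiv> CC g pL q y xs w \<beta> lam i"
abbreviation "Ei i t \<equiv> ell_e_i g pL q y xs (w,\<beta>,lam) i t"

lemma Ei_meas[measurable]: "(\<lambda>t. exp (s*t) * exp (Ei i t)) \<in> borel_measurable borel"
  unfolding ell_e_i_form by measurable

lemma ell_i_max: "Ei i s \<le> Ei i (vtilde g pL q y xs (w,\<beta>,lam) $ i)"
  and ell_i_uq: "Ei i s = Ei i (vtilde g pL q y xs (w,\<beta>,lam) $ i) \<Longrightarrow> s = vtilde g pL q y xs (w,\<beta>,lam) $ i"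
  unfolding ell_e_i_form vtilde_nth[OF lam]
  using one_d_max[OF AA_pos[OF lam, of q y i] BB_pos[OF lam, of g pL q xs w \<beta> i], of s]
    one_d_uq[OF AA_pos[OF lam, of q y i] BB_pos[OF lam, of g pL q xs w \<beta> i], of s] by auto

lemma Zpos: "0 \<le> exp (C i) * (Gamma (A i + s) / B i powr (A i + s))" if "s \<ge> 0"
  using AA_pos[OF lam, of q y i] BB_pos[OF lam, of g pL q xs w \<beta> i] that
  by (intro mult_nonneg_nonneg divide_nonneg_nonneg) (auto intro: less_imp_le)

lemma Z0: "(\<integral>\<^sup>+t. ennreal (exp (Ei i t)) \<partial>lborel) = ennreal (exp (C i) * (Gamma (A i) / B i powr (A i)))"
  using Z_nn[OF lam, of 0] by simp

lemma integral_exp_ell_e: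
  "(\<integral>v. exp (ell_e g pL q y xs (w,\<beta>,lam) v) \<partial>(lborel::(real^'n) measure))
    = (\<Prod>i\<in>UNIV. exp (C i) * (Gamma (A i) / B i powr (A i)))"
proof -
  have "(\<lambda>v. exp (ell_e g pL q y xs (w,\<beta>,lam) v)) = (\<lambda>v::real^'n. \<Prod>i\<in>UNIV. exp (Ei i (v$i)))"
    by (simp add: ell_e_sum exp_sum)
  moreover have "(\<integral>v. (\<Prod>i\<in>UNIV. exp (Ei i (v$i))) \<partial>(lborel::(real^'n) measure)) =
       (\<Prod>i\<in>UNIV. exp (C i) * (Gamma (A i) / B i powr (A i)))"
    by (rule integral_vec_prod) (use Ei_meas[of 0] Z0 Zpos[of 0] in auto)
  ultimately show ?thesis by simp
qed

lemma marg_eq: "marg_loglik g pL q y xs (w,\<beta>,lam) = (\<Sum>i\<in>UNIV. C i + ln (Gamma (A i)) - A i * ln (B i))"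
proof -
  have pos: "0 < exp (C i) * (Gamma (A i) / B i powr (A i))" for i
    using AA_pos[OF lam, of q y i] BB_pos[OF lam, of g pL q xs w \<beta> i] by auto
  have e: "ln (exp (C i) * (Gamma (A i) / B i powr (A i))) = C i + ln (Gamma (A i)) - A i * ln (B i)" for i
  proof -
    have a: "A i > 0" "B i > 0" "Gamma (A i) > 0" using AA_pos[OF lam, of q y i] BB_pos[OF lam, of g pL q xs w \<beta> i] by auto
    have p: "B i powr A i > 0" using a by simp
    have g0: "Gamma (A i) \<noteq> 0" using a(3) by linarith
    have "ln (exp (C i) * (Gamma (A i) / B i powr (A i))) = C i + ln (Gamma (A i) / B i powr (A i))"
      using a p g0 by (subst ln_mult) auto
    also have "ln (Gamma (A i) / B i powr (A i)) = ln (Gamma (A i)) - ln (B i powr A i)"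
      using a p g0 by (subst ln_div) auto
    also have "ln (B i powr A i) = A i * ln (B i)" using a by (simp add: ln_powr)
    finally show ?thesis by simp
  qed
  show ?thesis
    unfolding marg_loglik_def integral_exp_ell_e
    by (subst ln_prod) (simp, rule less_imp_neq[symmetric], rule pos, rule sum.cong, simp, rule e)
qed

lemma hlik_vtilde: "hlik g pL q y xs (w,\<beta>,lam) (vtilde g pL q y xs (w,\<beta>,lam)) = marg_loglik g pL q y xs (w,\<beta>,lam)"
proof -
  have "hlik g pL q y xs (w,\<beta>,lam) (vtilde g pL q y xs (w,\<beta>,lam)) =
     (\<Sum>i\<in>UNIV. Ei i (vtilde g pL q y xs (w,\<beta>,lam) $ i) + c_adj lam (yplus q y i))"
    unfolding hlik_def ell_e_sum by (simp add: sum.distrib)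
  also have "\<dots> = (\<Sum>i\<in>UNIV. C i + ln (Gamma (A i)) - A i * ln (B i))"
  proof (rule sum.cong)
    fix i
    have a: "A i > 0" "B i > 0" using AA_pos[OF lam, of q y i] BB_pos[OF lam, of g pL q xs w \<beta> i] by auto
    have cA: "c_adj lam (yplus q y i) = A i + ln (Gamma (A i)) - A i * ln (A i)" by (simp add: c_adj_def AA_def)
    have e: "B i * exp (ln (A i / B i)) = A i" using a by simp
    show "Ei i (vtilde g pL q y xs (w,\<beta>,lam) $ i) + c_adj lam (yplus q y i) = C i + ln (Gamma (A i)) - A i * ln (B i)"
      unfolding ell_e_i_form vtilde_nth[OF lam] cA e using a
      by (simp add: ln_div algebra_simps)
  qed simp
  finally show ?thesis using marg_eq by simp
qed

lemma hlik_max: "(\<forall>v'. hlik g pL q y xs (w,\<beta>,lam) v' \<le> hlik g pL q y xs (w,\<beta>,lam) v) \<longleftrightarrow> v = vtilde g pL q y xs (w,\<beta>,lam)"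
  unfolding hlik_def ell_e_sum
  by (rule max_sep) (use ell_i_max ell_i_uq in auto)

lemma post_max: "(\<forall>v'. log_post g pL q y xs (w,\<beta>,lam) v' \<le> log_post g pL q y xs (w,\<beta>,lam) v) \<longleftrightarrow> v = vtilde g pL q y xs (w,\<beta>,lam)"
  unfolding log_post_def ell_e_sum diff_conv_add_uminus
  by (rule max_sep) (use ell_i_max ell_i_uq in auto)

end


context
  fixes g :: "nat \<Rightarrow> real^'p \<Rightarrow> 'w \<Rightarrow> real" and pL :: nat
    and q :: "'n::finite \<Rightarrow> nat" and y :: "'n \<Rightarrow> nat \<Rightarrow> nat"
    and xs :: "'n \<Rightarrow> nat \<Rightarrow> real^'p"
    and w :: 'w and \<beta> :: "nat \<Rightarrow> real" and lam :: real
  assumes lam: "lam > 0"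
begin

abbreviation "A' i \<equiv> AA q y lam i"
abbreviation "B' i \<equiv> BB g pL q xs w \<beta> lam i"
abbreviation "C' i \<equiv> CC g pL q y xs w \<beta> lam i"
abbreviation "E' i t \<equiv> ell_e_i g pL q y xs (w,\<beta>,lam) i t"
abbreviation "Z0 i \<equiv> exp (C' i) * (Gamma (A' i) / B' i powr (A' i))"
abbreviation "Z1 i \<equiv> exp (C' i) * (Gamma (A' i + 1) / B' i powr (A' i + 1))"

lemma Zratio: "Z1 i / Z0 i = A' i / B' i" and Z0_pos: "Z0 i > 0"
proof -
  have a: "A' i > 0" "B' i > 0" using AA_pos[OF lam, of q y i] BB_pos[OF lam, of g pL q xs w \<beta> i] by auto
  have G: "Gamma (A' i + 1) = A' i * Gamma (A' i)"
    by (rule Gamma_plus1) (use a in auto)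
  have P: "B' i powr (A' i + 1) = B' i powr A' i * B' i" using a by (simp add: powr_add)
  have g0: "Gamma (A' i) > 0" using a by simp
  have p0: "B' i powr A' i > 0" using a by simp
  show "Z0 i > 0" using g0 p0 by simp
  have g1: "Gamma (A' i) \<noteq> 0" using g0 by linarith
  have p1: "B' i powr A' i \<noteq> 0" using p0 by linarith
  show "Z1 i / Z0 i = A' i / B' i"
    unfolding G P using a g1 p1 by (simp add: field_simps)
qed

lemma int1: "(\<integral>t. exp (s * t) * exp (E' i t) \<partial>lborel) = exp (C' i) * (Gamma (A' i + s) / B' i powr (A' i + s))"
  if s: "s \<ge> 0"
proof -
  have "(\<integral>t. exp (s * t) * exp (E' i t) \<partial>lborel) = enn2real (\<integral>\<^sup>+t. ennreal (exp (s * t) * exp (E' i t)) \<partial>lborel)"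
    by (rule integral_eq_nn_integral) (use Ei_meas[OF lam] in auto)
  also have "\<dots> = exp (C' i) * (Gamma (A' i + s) / B' i powr (A' i + s))"
    unfolding Z_nn[OF lam s] by (rule enn2real_ennreal[OF Zpos[OF lam s]])
  finally show ?thesis .
qed

lemma exp_vtilde: "exp (vtilde g pL q y xs (w,\<beta>,lam) $ i) = A' i / B' i"
  unfolding vtilde_nth[OF lam] using AA_pos[OF lam, of q y i] BB_pos[OF lam, of g pL q xs w \<beta> i] by simp

lemma post_i: "post_exp_i g pL q y xs (w,\<beta>,lam) i exp = A' i / B' i"
proof -
  have "post_exp_i g pL q y xs (w,\<beta>,lam) i exp = Z1 i / Z0 i"
    unfolding post_exp_i_def using int1[where s=1 and i=i] int1[where s=0 and i=i] by simp
  then show ?thesis using Zratio by simp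
qed

lemma post_j: "post_exp g pL q y xs (w,\<beta>,lam) (\<lambda>v. mu_c g pL xs (w,\<beta>,lam) i j (v $ i))
   = mu_m g pL xs (w,\<beta>,lam) i j * (A' i / B' i)"
proof -
  let ?M = "mu_m g pL xs (w,\<beta>,lam) i j"
  have mc: "mu_c g pL xs (w,\<beta>,lam) i j t = ?M * exp (1 * t)" for t
    by (simp add: mu_c_def mu_m_def exp_add)
  have Mpos: "?M > 0" by (simp add: mu_m_def)
  define h where "h = (\<lambda>k t. (if k = i then ?M * exp (1 * t) else 1) * exp (E' k t))"
  define W where "W k = (if k = i then ?M * Z1 k else Z0 k)" for k
  have hm: "h k \<in> borel_measurable borel" for k
    unfolding h_def ell_e_i_form by measurable
  have hn: "0 \<le> h k t" for k t using Mpos by (simp add: h_def)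
  have hW: "(\<integral>\<^sup>+t. ennreal (h k t) \<partial>lborel) = ennreal (W k)" for k
  proof (cases "k = i")
    case True
    have "(\<integral>\<^sup>+t. ennreal (h k t) \<partial>lborel) = (\<integral>\<^sup>+t. ennreal ?M * ennreal (exp (1 * t) * exp (E' k t)) \<partial>lborel)"
      using True Mpos by (intro nn_integral_cong) (simp add: h_def ennreal_mult[symmetric] mult.assoc)
    also have "\<dots> = ennreal ?M * (\<integral>\<^sup>+t. ennreal (exp (1 * t) * exp (E' k t)) \<partial>lborel)"
      by (rule nn_integral_cmult) (unfold ell_e_i_form, measurable)
    also have "\<dots> = ennreal (W k)"
      unfolding Z_nn[OF lam zero_le_one] W_def using True by (simp add: ennreal_mult'[symmetric] less_imp_le[OF Mpos] mult.assoc)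
    finally show ?thesis .
  next
    case False
    then show ?thesis unfolding h_def W_def using Z_nn[OF lam order.refl, where i=k] by simp
  qed
  have Wn: "0 \<le> W k" for k
  proof -
    have z: "0 \<le> Z1 k" "0 \<le> Z0 k"
      using Zpos[OF lam zero_le_one, where i=k and g=g and pL=pL and q=q and y=y and xs=xs and w=w and \<beta>=\<beta>]
        Zpos[OF lam order.refl, where i=k and g=g and pL=pL and q=q and y=y and xs=xs and w=w and \<beta>=\<beta>] by simp_all
    show ?thesis unfolding W_def using mult_nonneg_nonneg[OF less_imp_le[OF Mpos] z(1)] z(2) by auto
  qed
  have num: "(\<lambda>v::real^'n. mu_c g pL xs (w,\<beta>,lam) i j (v $ i) * exp (ell_e g pL q y xs (w,\<beta>,lam) v))
      = (\<lambda>v. \<Prod>k\<in>UNIV. h k (v $ k))"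
  proof
    fix v :: "real^'n"
    have "(\<Prod>k\<in>UNIV. h k (v $ k)) = (\<Prod>k\<in>UNIV. (if k = i then ?M * exp (1 * (v$k)) else 1)) * (\<Prod>k\<in>UNIV. exp (E' k (v$k)))"
      unfolding h_def by (rule prod.distrib)
    also have "(\<Prod>k\<in>UNIV. (if k = i then ?M * exp (1 * (v$k)) else 1)) = ?M * exp (1 * (v$i))"
      by simp
    finally show "mu_c g pL xs (w,\<beta>,lam) i j (v $ i) * exp (ell_e g pL q y xs (w,\<beta>,lam) v) = (\<Prod>k\<in>UNIV. h k (v $ k))"
      by (simp add: mc ell_e_sum exp_sum)
  qed
  have "post_exp g pL q y xs (w,\<beta>,lam) (\<lambda>v. mu_c g pL xs (w,\<beta>,lam) i j (v $ i)) = (\<Prod>k\<in>UNIV. W k) / (\<Prod>k\<in>UNIV. Z0 k)"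
    unfolding post_exp_def num integral_exp_ell_e[OF lam]
    by (subst integral_vec_prod[OF hm hn hW Wn]) simp
  also have "\<dots> = (\<Prod>k\<in>UNIV. W k / Z0 k)" by (rule prod_dividef[symmetric])
  also have "\<dots> = (\<Prod>k\<in>UNIV. if k = i then ?M * (Z1 k / Z0 k) else 1)"
  proof (rule prod.cong)
    fix k :: 'n
    have nz: "Z0 k \<noteq> 0" using Z0_pos[of k] by linarith
    show "W k / Z0 k = (if k = i then ?M * (Z1 k / Z0 k) else 1)"
    proof (cases "k = i")
      case True then show ?thesis by (simp add: W_def)
    next
      case False then show ?thesis unfolding W_def using False divide_self[OF nz] by (simp only: if_False)
    qed
  qed simp
  also have "\<dots> = ?M * (A' i / B' i)" using Zratio by simp
  finally show ?thesis .
qed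

end

lemma PS_facts:
  fixes \<theta> :: "'w param" and q :: "'n::finite \<Rightarrow> nat"
  assumes "\<theta> \<in> ParamSpace"
  shows "hlik g pL q y xs \<theta> (vtilde g pL q y xs \<theta>) = marg_loglik g pL q y xs \<theta>
    \<and> (\<forall>v. (\<forall>v'. hlik g pL q y xs \<theta> v' \<le> hlik g pL q y xs \<theta> v) \<longleftrightarrow> v = vtilde g pL q y xs \<theta>)"
proof -
  obtain w b l where th: "\<theta> = (w, b, l)" by (cases \<theta>) auto
  have l: "l > 0" using assms th by (simp add: ParamSpace_def)
  show ?thesis unfolding th by (intro conjI allI hlik_vtilde[OF l] hlik_max[OF l])
qed

theorem mainTheorem2:
  fixes g :: "nat \<Rightarrow> real^'p \<Rightarrow> 'w \<Rightarrow> real" and pL :: nat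
    and q :: "'n::finite \<Rightarrow> nat" and y :: "'n \<Rightarrow> nat \<Rightarrow> nat"
    and xs :: "'n \<Rightarrow> nat \<Rightarrow> real^'p"
    and w :: 'w and \<beta> :: "nat \<Rightarrow> real" and lam :: real
  assumes "lam > 0"
  shows
    \<comment> \<open>(i)\<close>
    "(\<forall>v::real^'n. (\<forall>v'. hlik g pL q y xs (w, \<beta>, lam) v' \<le> hlik g pL q y xs (w, \<beta>, lam) v)
        \<longleftrightarrow> v = vtilde g pL q y xs (w, \<beta>, lam))
   \<and> (\<forall>v::real^'n. (\<forall>v'. log_post g pL q y xs (w, \<beta>, lam) v' \<le> log_post g pL q y xs (w, \<beta>, lam) v)
        \<longleftrightarrow> v = vtilde g pL q y xs (w, \<beta>, lam))
   \<comment> \<open>(ii)\<close>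
   \<and> hlik g pL q y xs (w, \<beta>, lam) (vtilde g pL q y xs (w, \<beta>, lam)) = marg_loglik g pL q y xs (w, \<beta>, lam)
   \<and> (\<forall>\<theta>h \<in> ParamSpace. \<forall>vh::real^'n.
        (\<forall>\<theta>\<in>ParamSpace. \<forall>v. hlik g pL q y xs \<theta> v \<le> hlik g pL q y xs \<theta>h vh)
        \<longleftrightarrow> ((\<forall>\<theta>\<in>ParamSpace. marg_loglik g pL q y xs \<theta> \<le> marg_loglik g pL q y xs \<theta>h)
             \<and> vh = vtilde g pL q y xs \<theta>h))
   \<comment> \<open>(iii)\<close>
   \<and> (\<forall>i. exp (vtilde g pL q y xs (w, \<beta>, lam) $ i) = post_exp_i g pL q y xs (w, \<beta>, lam) i exp
        \<and> (\<forall>j < q i. exp (vtilde g pL q y xs (w, \<beta>, lam) $ i) * mu_m g pL xs (w, \<beta>, lam) i j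
              = post_exp g pL q y xs (w, \<beta>, lam) (\<lambda>v. mu_c g pL xs (w, \<beta>, lam) i j (v $ i))))"
  proof -
  have F: "\<And>\<theta>. \<theta> \<in> ParamSpace \<Longrightarrow> hlik g pL q y xs \<theta> (vtilde g pL q y xs \<theta>) = marg_loglik g pL q y xs \<theta>
    \<and> (\<forall>v. (\<forall>v'. hlik g pL q y xs \<theta> v' \<le> hlik g pL q y xs \<theta> v) \<longleftrightarrow> v = vtilde g pL q y xs \<theta>)"
    by (rule PS_facts)
  have B: "\<And>\<theta> v. \<theta> \<in> ParamSpace \<Longrightarrow> hlik g pL q y xs \<theta> v \<le> marg_loglik g pL q y xs \<theta>"
    using F by metis
  have J: "\<forall>\<theta>h \<in> ParamSpace. \<forall>vh::real^'n.
        (\<forall>\<theta>\<in>ParamSpace. \<forall>v. hlik g pL q y xs \<theta> v \<le> hlik g pL q y xs \<theta>h vh)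
        \<longleftrightarrow> ((\<forall>\<theta>\<in>ParamSpace. marg_loglik g pL q y xs \<theta> \<le> marg_loglik g pL q y xs \<theta>h)
             \<and> vh = vtilde g pL q y xs \<theta>h)"
  proof (rule ballI, rule allI, rule iffI)
    fix \<theta>h :: "'w param" and vh assume th: "\<theta>h \<in> ParamSpace"
      and H: "\<forall>\<theta>\<in>ParamSpace. \<forall>v. hlik g pL q y xs \<theta> v \<le> hlik g pL q y xs \<theta>h (vh::real^'n)"
    have e1: "hlik g pL q y xs \<theta>h vh = marg_loglik g pL q y xs \<theta>h"
      using H[rule_format, OF th, of "vtilde g pL q y xs \<theta>h"] F[OF th] B[OF th, of vh] by linarith
    have "vh = vtilde g pL q y xs \<theta>h"
      using F[OF th] H th by blast
    moreover have "\<forall>\<theta>\<in>ParamSpace. marg_loglik g pL q y xs \<theta> \<le> marg_loglik g pL q y xs \<theta>h"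
    proof
      fix \<theta> :: "'w param" assume t: "\<theta> \<in> ParamSpace"
      show "marg_loglik g pL q y xs \<theta> \<le> marg_loglik g pL q y xs \<theta>h"
        using H[rule_format, OF t, of "vtilde g pL q y xs \<theta>"] F[OF t] e1 by linarith
    qed
    ultimately show "(\<forall>\<theta>\<in>ParamSpace. marg_loglik g pL q y xs \<theta> \<le> marg_loglik g pL q y xs \<theta>h)
             \<and> vh = vtilde g pL q y xs \<theta>h" by blast
  next
    fix \<theta>h :: "'w param" and vh assume th: "\<theta>h \<in> ParamSpace"
      and H: "(\<forall>\<theta>\<in>ParamSpace. marg_loglik g pL q y xs \<theta> \<le> marg_loglik g pL q y xs \<theta>h)
             \<and> (vh::real^'n) = vtilde g pL q y xs \<theta>h"
    show "\<forall>\<theta>\<in>ParamSpace. \<forall>v. hlik g pL q y xs \<theta> v \<le> hlik g pL q y xs \<theta>h vh"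
    proof (intro ballI allI)
      fix \<theta> :: "'w param" and v assume t: "\<theta> \<in> ParamSpace"
      show "hlik g pL q y xs \<theta> v \<le> hlik g pL q y xs \<theta>h vh"
        using B[OF t, of v] H t F[OF th] by fastforce
    qed
  qed
  have I3: "\<forall>i. exp (vtilde g pL q y xs (w, \<beta>, lam) $ i) = post_exp_i g pL q y xs (w, \<beta>, lam) i exp
        \<and> (\<forall>j < q i. exp (vtilde g pL q y xs (w, \<beta>, lam) $ i) * mu_m g pL xs (w, \<beta>, lam) i j
              = post_exp g pL q y xs (w, \<beta>, lam) (\<lambda>v. mu_c g pL xs (w, \<beta>, lam) i j (v $ i)))"
  proof (intro allI conjI impI)
    fix i j
    show "exp (vtilde g pL q y xs (w, \<beta>, lam) $ i) = post_exp_i g pL q y xs (w, \<beta>, lam) i exp"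
      unfolding exp_vtilde[OF assms] post_i[OF assms] ..
    show "exp (vtilde g pL q y xs (w, \<beta>, lam) $ i) * mu_m g pL xs (w, \<beta>, lam) i j
              = post_exp g pL q y xs (w, \<beta>, lam) (\<lambda>v. mu_c g pL xs (w, \<beta>, lam) i j (v $ i))"
      unfolding exp_vtilde[OF assms] post_j[OF assms] by (rule mult.commute)
  qed
  have I1: "\<forall>v::real^'n. (\<forall>v'. hlik g pL q y xs (w, \<beta>, lam) v' \<le> hlik g pL q y xs (w, \<beta>, lam) v)
        \<longleftrightarrow> v = vtilde g pL q y xs (w, \<beta>, lam)"
    by (intro allI hlik_max[OF assms])
  have I2: "\<forall>v::real^'n. (\<forall>v'. log_post g pL q y xs (w, \<beta>, lam) v' \<le> log_post g pL q y xs (w, \<beta>, lam) v)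
        \<longleftrightarrow> v = vtilde g pL q y xs (w, \<beta>, lam)"
    by (intro allI post_max[OF assms])
  show ?thesis
    by (intro conjI I1 I2 hlik_vtilde[OF assms] J I3)
qed

end
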